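(* For $n\ge 1$, \begin{align*} (\mathfrak C_0+\mathfrak C_0+\mathfrak C_0+\mathfrak C_0)^n&=\frac{(2n)!}{6}\sum_{l=0}^{n}\frac{(-1)^{n-l}(2n-2l-3)!!\,(2l-1)(2l-2)(2l-3)}{2^{n-l}(n-l)!\,(2l)!}\mathfrak C_{2l}\\ &\quad+\frac{(2n)!}{6}\sum_{l=1}^{n}\frac{(-1)^{n-l}(2n-2l-3)!!\,(2l)(2l-1)(2l-3)^3}{2^{n-l}(n-l)!\,(2l)!}\mathfrak C_{2l-2}. \end{align*}
   Context: The numbers $\mathfrak C_{2n}$ (Cauchy numbers with level $2$) are defined by $\frac{t}{{\rm arcsinh}\,t}=\sum_{n=0}^\infty\mathfrak C_{2n}\frac{t^{2n}}{(2n)!}$. Convolution notation: $(\mathfrak C_{2j_1}+\cdots+\mathfrak C_{2j_k})^n:=\sum_{i_1+\cdots+i_k=n,\ i_1,\dots,i_k\ge0}\frac{(2n)!}{(2i_1)!\cdots(2i_k)!}\mathfrak C_{2i_1+2j_1}\cdots\mathfrak C_{2i_k+2j_k}$. Double factorials: $(2i-1)!!=(2i-1)(2i-3)\cdots1$ for $i\ge1$, $(-1)!!=1$, and $(-(2i+1))!!=\frac{(-1)^i}{(2i-1)!!}$ for $i\ge1$. *)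

theory Defs
  imports "HOL-Analysis.Analysis"
begin

definition t_over_arsinh :: "real \<Rightarrow> real" where
  "t_over_arsinh t = (if t = 0 then 1 else t / arsinh t)"

text \<open>Cauchy numbers with level 2: the Taylor coefficients (times m!) of t / arcsinh t at 0,
  i.e. t/arcsinh t = sum_n cauchy2 (2n) t^(2n)/(2n)!.  cauchy2 m is the paper's C_m.\<close>
definition cauchy2 :: "nat \<Rightarrow> real" where
  "cauchy2 m = ((deriv ^^ m) t_over_arsinh) 0"

text \<open>Double factorial for odd integers m: (2i-1)!! = 1*3*...*(2i-1) for i \<ge> 0 (so (-1)!! = 1),
  and (-(2i+1))!! = (-1)^i / (2i-1)!! for i \<ge> 1.\<close>
definition dfact :: "int \<Rightarrow> real" where
  "dfact m = (if m \<ge> -1 then (\<Prod>j=1..nat ((m + 1) div 2). real (2*j - 1))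
              else (let i = nat ((- m - 1) div 2) in (-1)^i / (\<Prod>j=1..i. real (2*j - 1))))"

text \<open>Convolution notation (C_{2j_1} + ... + C_{2j_k})^n, with js = [j_1,...,j_k].\<close>
definition cauchy_conv :: "nat list \<Rightarrow> nat \<Rightarrow> real" where
  "cauchy_conv js n =
     (\<Sum>is \<in> {is. length is = length js \<and> sum_list is = n}.
        fact (2*n) / (\<Prod>k<length js. fact (2 * is!k))
        * (\<Prod>k<length js. cauchy2 (2 * is!k + 2 * js!k)))"

end

theory Submission
  imports Defs "HOL-Complex_Analysis.Complex_Analysis"
begin


definition Lst :: "nat \<Rightarrow> nat \<Rightarrow> nat list set" where
  "Lst k n = {is. length is = k \<and> sum_list is = n}"

lemma Lst_finite: "finite (Lst k n)"
proof -
  have "Lst k n \<subseteq> {is. set is \<subseteq> {0..n} \<and> length is = k}"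
    by (auto simp: Lst_def intro: member_le_sum_list)
  moreover have "finite {is. set is \<subseteq> {0..n} \<and> length is = k}"
    by (rule finite_lists_length_eq) simp
  ultimately show ?thesis by (rule finite_subset)
qed

lemma Lst_0: "Lst 0 n = (if n = 0 then {[]} else {})"
  by (auto simp: Lst_def)

lemma Lst_Suc: "Lst (Suc k) n = (\<lambda>(i, is). i # is) ` (SIGMA i:{0..n}. Lst k (n - i))"
proof (rule set_eqI)
  fix xs
  show "xs \<in> Lst (Suc k) n \<longleftrightarrow> xs \<in> (\<lambda>(i, is). i # is) ` (SIGMA i:{0..n}. Lst k (n - i))"
  proof
    assume "xs \<in> Lst (Suc k) n"
    then obtain i ys where xs: "xs = i # ys" "length ys = k" "i + sum_list ys = n"
      by (cases xs) (auto simp: Lst_def)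
    then show "xs \<in> (\<lambda>(i, is). i # is) ` (SIGMA i:{0..n}. Lst k (n - i))"
      by (auto simp: Lst_def image_iff intro!: bexI[of _ "(i, ys)"])
  qed (auto simp: Lst_def)
qed

lemma fps_power_nth_lists:
  fixes f :: "'a :: comm_ring_1 fps"
  shows "fps_nth (f ^ k) n = (\<Sum>is\<in>Lst k n. \<Prod>j<k. fps_nth f (is ! j))"
proof (induction k arbitrary: n)
  case 0
  then show ?case by (simp add: Lst_0)
next
  case (Suc k)
  have inj: "inj_on (\<lambda>(i, is). i # is) (SIGMA i:{0..n}. Lst k (n - i))"
    by (auto simp: inj_on_def)
  have "fps_nth (f ^ Suc k) n = (\<Sum>i=0..n. fps_nth f i * fps_nth (f ^ k) (n - i))"
    by (simp add: fps_mult_nth)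
  also have "\<dots> = (\<Sum>i=0..n. \<Sum>is\<in>Lst k (n - i). fps_nth f i * (\<Prod>j<k. fps_nth f (is ! j)))"
    by (simp add: Suc.IH sum_distrib_left)
  also have "\<dots> = (\<Sum>(i, is)\<in>(SIGMA i:{0..n}. Lst k (n - i)). \<Prod>j<Suc k. fps_nth f ((i # is) ! j))"
    by (subst sum.Sigma) (auto simp: Lst_finite prod.lessThan_Suc_shift simp del: prod.lessThan_Suc intro!: sum.cong)
  also have "\<dots> = (\<Sum>is\<in>Lst (Suc k) n. \<Prod>j<Suc k. fps_nth f (is ! j))"
    unfolding Lst_Suc by (subst sum.reindex[OF inj]) (simp add: case_prod_unfold)
  finally show ?case .
qed

lemma compose_X2_nth:
  fixes a :: "'a :: comm_ring_1 fps"
  shows "fps_nth (a oo fps_X^2) n = (if even n then fps_nth a (n div 2) else 0)"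
proof -
  have "fps_nth (a oo fps_X^2) n = (\<Sum>i=0..n. fps_nth a i * (if n = 2 * i then 1 else 0))"
    by (simp add: fps_compose_nth power_mult[symmetric] fps_X_power_nth mult.commute)
  also have "\<dots> = (\<Sum>i\<in>{0..n} \<inter> {i. n = 2 * i}. fps_nth a i)"
    by (subst sum.inter_restrict) (auto intro!: sum.cong)
  also have "\<dots> = (if even n then fps_nth a (n div 2) else 0)"
  proof (cases "even n")
    case True
    then have "{0..n} \<inter> {i. n = 2 * i} = {n div 2}" by auto
    then show ?thesis using True by simp
  next
    case False
    then have "{0..n} \<inter> {i. n = 2 * i} = {}" by auto
    then show ?thesis using False by simp
  qed
  finally show ?thesis .
qed

lemma even_fps_compose:
  fixes f :: "'a :: comm_ring_1 fps"
  assumes "\<And>n. odd n \<Longrightarrow> fps_nth f n = 0"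
  shows "f = Abs_fps (\<lambda>i. fps_nth f (2 * i)) oo fps_X^2"
  by (auto simp: fps_eq_iff compose_X2_nth assms)



definition Sc :: "complex \<Rightarrow> complex" where "Sc z = (z^2 + 1) powr of_real (1/2)"

lemma arsinh_Sc: "arsinh z = Ln (z + Sc z)"
  by (simp add: arsinh_def Sc_def)

lemma Sc_sq: "z^2 + 1 \<noteq> 0 \<Longrightarrow> Sc z ^ 2 = z^2 + 1"
proof -
  assume "z^2 + 1 \<noteq> 0"
  then show ?thesis unfolding Sc_def powr_def
    by (simp add: exp_double[symmetric] power2_eq_square[symmetric] flip: exp_add) 
qed

lemma Sc_nz: "z^2 + 1 \<noteq> 0 \<Longrightarrow> Sc z \<noteq> 0"
  using Sc_sq by force

lemma Sc_deriv:
  assumes "z^2 + 1 \<notin> \<real>\<^sub>\<le>\<^sub>0"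
  shows "(Sc has_field_derivative (z / Sc z)) (at z)"
proof -
  have nz: "z^2 + 1 \<noteq> 0" using assms by auto
  have "((\<lambda>z. (z^2 + 1) powr of_real (1/2)) has_field_derivative
     (of_real (1/2) * (z^2+1) powr (of_real (1/2) - 1)) * (2 * z)) (at z)"
    by (rule DERIV_chain2[where g="\<lambda>z. z^2+1" and x=z, OF has_field_derivative_powr[OF assms]]) (auto intro!: derivative_eq_intros)
  moreover have "(of_real (1/2) * (z^2+1) powr (of_real (1/2) - 1)) * (2 * z) = z / Sc z"
  proof -
    have "(z^2+1) powr (of_real (1/2) - 1) = (z^2+1) powr (of_real (1/2)) / (z^2+1)"
    proof -
      have "(of_real (1/2) - 1) * Ln (z^2+1) = of_real (1/2) * Ln (z^2+1) - Ln (z^2+1)"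
        by (simp add: algebra_simps)
      define w where "w = z^2+1"
      have e: "exp (Ln w) = w" using nz by (simp add: w_def)
      have "exp (- (Ln w / 2)) = exp (Ln w / 2 - Ln w)" by (simp add: algebra_simps)
      also have "\<dots> = exp (Ln w / 2) / exp (Ln w)" by (rule exp_diff)
      also have "\<dots> = exp (Ln w / 2) / w" by (simp only: e)
      finally have "exp (- (Ln w / 2)) = exp (Ln w / 2) / w" .
      then show ?thesis using nz unfolding powr_def by (simp add: w_def)
    qed
    also have "\<dots> = 1 / Sc z" using Sc_sq[OF nz] Sc_nz[OF nz] nz unfolding Sc_def[symmetric]
      by (simp add: field_simps power2_eq_square)
    finally show ?thesis by simp
  qed
  ultimately show ?thesis unfolding Sc_def by simp
qed

lemma arsinh_deriv:
  assumes "z^2 + 1 \<notin> \<real>\<^sub>\<le>\<^sub>0" "z + Sc z \<notin> \<real>\<^sub>\<le>\<^sub>0"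
  shows "(arsinh has_field_derivative (1 / Sc z)) (at z)"
proof -
  have nz: "z^2 + 1 \<noteq> 0" using assms by auto
  have "((\<lambda>z. Ln (z + Sc z)) has_field_derivative (inverse (z + Sc z) * (1 + z / Sc z))) (at z)"
    by (rule DERIV_chain2[where g="\<lambda>z. z + Sc z" and x=z, OF has_field_derivative_Ln[OF assms(2)]])
       (auto intro!: derivative_eq_intros Sc_deriv assms)
  moreover have "z + Sc z \<noteq> 0" using assms(2) by auto
  hence "inverse (z + Sc z) * (1 + z / Sc z) = 1 / Sc z" using Sc_nz[OF nz]
    by (simp add: field_simps)
  ultimately show ?thesis by (simp add: arsinh_Sc[abs_def])
qed

definition Qc :: "complex \<Rightarrow> complex" where "Qc z = (if z = 0 then 1 else arsinh z / z)"
definition Gc :: "complex \<Rightarrow> complex" where "Gc z = (if z = 0 then 1 else z / arsinh z)"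

lemma Gc_inv: "Gc z = inverse (Qc z)"
  by (simp add: Gc_def Qc_def field_simps)

lemma Sc_0 [simp]: "Sc 0 = 1"
  by (simp add: Sc_def)

lemma ev_notnp:
  fixes f :: "complex \<Rightarrow> complex"
  assumes "isCont f 0" "f 0 \<notin> \<real>\<^sub>\<le>\<^sub>0"
  shows "eventually (\<lambda>z. f z \<notin> \<real>\<^sub>\<le>\<^sub>0) (nhds 0)"
proof -
  have "open (- \<real>\<^sub>\<le>\<^sub>0 :: complex set)" by auto
  from topological_tendstoD[OF assms(1)[unfolded isCont_def] this] assms(2)
  have "eventually (\<lambda>z. f z \<in> - \<real>\<^sub>\<le>\<^sub>0) (at 0)" by auto
  with assms(2) show ?thesis by (auto simp: eventually_nhds_conv_at)
qed

lemma ev1: "eventually (\<lambda>z. z^2 + 1 \<notin> \<real>\<^sub>\<le>\<^sub>0 \<and> z + Sc z \<notin> \<real>\<^sub>\<le>\<^sub>0) (nhds 0)"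
proof -
  have c0: "isCont Sc 0"
    by (rule DERIV_isCont[OF Sc_deriv]) simp
  have "eventually (\<lambda>z::complex. z^2 + 1 \<notin> \<real>\<^sub>\<le>\<^sub>0) (nhds 0)"
    using ev_notnp[where f="\<lambda>z. z^2+1"] by (auto intro!: continuous_intros)
  moreover have "eventually (\<lambda>z. z + Sc z \<notin> \<real>\<^sub>\<le>\<^sub>0) (nhds 0)"
    by (rule ev_notnp[where f="\<lambda>z. z + Sc z"]) (auto intro!: continuous_intros c0)
  ultimately show ?thesis by eventually_elim auto
qed

lemma Qc_analytic: "Qc analytic_on {0}"
proof -
  obtain e where e: "e > 0" "\<And>z. dist z 0 < e \<Longrightarrow> z^2 + 1 \<notin> \<real>\<^sub>\<le>\<^sub>0 \<and> z + Sc z \<notin> \<real>\<^sub>\<le>\<^sub>0"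
    using ev1 unfolding eventually_nhds_metric by blast
  have hol: "arsinh holomorphic_on ball 0 e"
    unfolding holomorphic_on_open[OF open_ball]
    using e arsinh_deriv by (auto simp: dist_commute) blast
  have d0: "deriv (arsinh :: complex \<Rightarrow> complex) 0 = 1"
    using arsinh_deriv[of 0] by (auto intro!: DERIV_imp_deriv)
  have "(\<lambda>z. if z = 0 then deriv arsinh 0 else (arsinh z - arsinh 0) / (z - 0)) holomorphic_on ball 0 e"
    by (rule pole_lemma_open[OF hol open_ball])
  also have "(\<lambda>z. if z = 0 then deriv arsinh 0 else (arsinh z - arsinh 0) / (z - 0)) = Qc"
    by (auto simp: Qc_def d0 fun_eq_iff)
  finally show ?thesis unfolding analytic_at using e(1) by (intro exI[of _ "ball 0 e"]) auto
qed

definition gF :: "complex fps" where "gF = inverse (fps_expansion Qc 0)"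

lemma Qc_exp: "Qc has_fps_expansion fps_expansion Qc 0"
  by (rule analytic_at_imp_has_fps_expansion_0[OF Qc_analytic])

lemma Gc_exp: "Gc has_fps_expansion gF"
proof -
  have "fps_nth (fps_expansion Qc 0) 0 = 1"
    by (simp add: fps_expansion_def Qc_def)
  then have "(\<lambda>x. inverse (Qc x)) has_fps_expansion gF"
    unfolding gF_def by (intro has_fps_expansion_inverse Qc_exp) auto
  then show ?thesis by (simp add: Gc_inv[abs_def])
qed

lemma gF_nth: "fps_nth gF n = (deriv ^^ n) Gc 0 / fact n"
  by (rule fps_nth_fps_expansion[OF Gc_exp])

definition vv :: "complex \<Rightarrow> complex" where "vv z = inverse (arsinh z)"
definition rr :: "complex \<Rightarrow> complex" where "rr z = inverse (Sc z)"
definition G1f :: "complex \<Rightarrow> complex" where "G1f z = vv z - z * vv z ^ 2 * rr z"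
definition G2f :: "complex \<Rightarrow> complex" where
  "G2f z = - 2 * vv z ^ 2 * rr z + 2 * z * vv z ^ 3 * rr z ^ 2 + z ^ 2 * vv z ^ 2 * rr z ^ 3"
definition G3f :: "complex \<Rightarrow> complex" where
  "G3f z = 6 * vv z ^ 3 * rr z ^ 2 + 4 * z * vv z ^ 2 * rr z ^ 3 - 6 * z * vv z ^ 4 * rr z ^ 3
     - 6 * z ^ 2 * vv z ^ 3 * rr z ^ 4 - 3 * z ^ 3 * vv z ^ 2 * rr z ^ 5"

context
  fixes z :: complex
  assumes c1: "z^2 + 1 \<notin> \<real>\<^sub>\<le>\<^sub>0" and c2: "z + Sc z \<notin> \<real>\<^sub>\<le>\<^sub>0" and c3: "arsinh z \<noteq> 0"
begin

lemma nz0: "z^2 + 1 \<noteq> 0"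
proof
  assume "z^2 + 1 = 0"
  with c1 show False by auto
qed

lemma Dv: "(vv has_field_derivative (- (vv z ^ 2 * rr z))) (at z)"
proof -
  have nz: "Sc z \<noteq> 0" using c1 Sc_nz nz0 by auto
  have "((\<lambda>z. inverse (arsinh z)) has_field_derivative (- ((1 / Sc z) * inverse(arsinh z ^ Suc (Suc 0))))) (at z)"
    by (rule DERIV_inverse_fun[OF arsinh_deriv[OF c1 c2] c3])
  then show ?thesis unfolding vv_def[abs_def] rr_def
    by (simp add: field_simps power2_eq_square)
qed

lemma Dr: "(rr has_field_derivative (- (z * rr z ^ 3))) (at z)"
proof -
  have nz: "Sc z \<noteq> 0" using c1 Sc_nz nz0 by auto
  have "((\<lambda>z. inverse (Sc z)) has_field_derivative (- ((z / Sc z) * inverse(Sc z ^ Suc (Suc 0))))) (at z)"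
    by (rule DERIV_inverse_fun[OF Sc_deriv[OF c1] nz])
  then show ?thesis unfolding rr_def[abs_def]
    by (simp add: field_simps power3_eq_cube)
qed

lemma DG0: "((\<lambda>z. z * vv z) has_field_derivative G1f z) (at z)"
  apply (rule derivative_eq_intros Dv Dr refl)+
  apply (simp add: G1f_def algebra_simps power2_eq_square power3_eq_cube)
  done

lemma DG1: "(G1f has_field_derivative G2f z) (at z)"
  unfolding G1f_def[abs_def]
  apply (rule derivative_eq_intros Dv Dr refl)+
  apply (simp add: G2f_def algebra_simps power2_eq_square power3_eq_cube)
  done

lemma DG2: "(G2f has_field_derivative G3f z) (at z)"
  unfolding G2f_def[abs_def]
  apply (rule derivative_eq_intros Dv Dr refl)+
  apply (simp add: G3f_def)
  apply algebra
  done

lemma ode_pt: "6 * (z * vv z) ^ 4 + Sc z * (z^3 * G3f z - 3 * z^2 * G2f z + 6 * z * G1f z - 6 * (z * vv z)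
     + z^5 * G3f z + z^3 * G1f z - z^2 * (z * vv z)) = 0"
proof -
  have nz: "Sc z \<noteq> 0" using c1 Sc_nz nz0 by auto
  have sq: "Sc z ^ 2 = z^2 + 1" using nz0 Sc_sq by auto
  have r: "rr z * Sc z = 1" using nz by (simp add: rr_def)
  show ?thesis unfolding G1f_def G2f_def G3f_def using r sq
    by algebra
qed

end

definition Hc :: "complex \<Rightarrow> complex" where
  "Hc w = 6 * Gc w ^ 4 + Sc w * (w^3 * deriv (deriv (deriv Gc)) w - 3 * w^2 * deriv (deriv Gc) w
     + 6 * w * deriv Gc w - 6 * Gc w + w^5 * deriv (deriv (deriv Gc)) w + w^3 * deriv Gc w - w^2 * Gc w)"

definition hF :: "complex fps" where
  "hF = fps_X^3 * fps_deriv (fps_deriv (fps_deriv gF)) - 3 * fps_X^2 * fps_deriv (fps_deriv gF)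
     + 6 * fps_X * fps_deriv gF - 6 * gF + fps_X^5 * fps_deriv (fps_deriv (fps_deriv gF))
     + fps_X^3 * fps_deriv gF - fps_X^2 * gF"

definition sF :: "complex fps" where "sF = fps_compose (fps_binomial (of_real (1/2))) (fps_X^2)"

lemma Sc_exp: "Sc has_fps_expansion sF"
proof -
  have "((\<lambda>u. (1 + u) powr of_real (1/2)) \<circ> (\<lambda>w::complex. w^2)) has_fps_expansion sF"
    unfolding sF_def
    by (intro has_fps_expansion_compose has_fps_expansion_binomial_complex has_fps_expansion_fps_X_power) simp
  moreover have "((\<lambda>u. (1 + u) powr of_real (1/2)) \<circ> (\<lambda>w::complex. w^2)) = Sc"
    by (auto simp: Sc_def fun_eq_iff add.commute)
  ultimately show ?thesis by simp
qed

lemma Hc_exp: "Hc has_fps_expansion (6 * gF^4 + sF * hF)"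
  unfolding Hc_def[abs_def] hF_def
  by (intro fps_expansion_intros Sc_exp Gc_exp)

lemma ev2: "eventually (\<lambda>z. z^2 + 1 \<notin> \<real>\<^sub>\<le>\<^sub>0 \<and> z + Sc z \<notin> \<real>\<^sub>\<le>\<^sub>0 \<and> Qc z \<noteq> 0) (nhds 0)"
proof -
  have "isCont Qc 0" using has_fps_expansion_imp_continuous[OF Qc_exp] by simp
  then have t: "(Qc \<longlongrightarrow> Qc 0) (at 0)" by (simp add: isCont_def)
  have "eventually (\<lambda>z. Qc z \<in> - {0}) (at 0)"
    by (rule topological_tendstoD[OF t]) (auto simp: Qc_def)
  then have "eventually (\<lambda>z. Qc z \<noteq> 0) (nhds 0)"
    by (auto simp: eventually_nhds_conv_at Qc_def)
  with ev1 show ?thesis by eventually_elim auto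
qed

lemma Hc_zero_punct: "eventually (\<lambda>z. Hc z = 0) (at 0)"
proof -
  obtain e where e: "e > 0" "\<And>z. dist z 0 < e \<Longrightarrow> z^2 + 1 \<notin> \<real>\<^sub>\<le>\<^sub>0 \<and> z + Sc z \<notin> \<real>\<^sub>\<le>\<^sub>0 \<and> Qc z \<noteq> 0"
    using ev2 unfolding eventually_nhds_metric by blast
  define B where "B = ball 0 e - {0::complex}"
  have oB: "open B" unfolding B_def by auto
  have PB: "z^2 + 1 \<notin> \<real>\<^sub>\<le>\<^sub>0" "z + Sc z \<notin> \<real>\<^sub>\<le>\<^sub>0" "arsinh z \<noteq> 0" if "z \<in> B" for z
  proof -
    from that have "dist z 0 < e" "z \<noteq> 0" by (auto simp: B_def dist_commute)
    with e(2)[of z] show "z^2 + 1 \<notin> \<real>\<^sub>\<le>\<^sub>0" "z + Sc z \<notin> \<real>\<^sub>\<le>\<^sub>0" "arsinh z \<noteq> 0"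
      by (auto simp: Qc_def)
  qed
  have GB: "Gc z = z * vv z" if "z \<in> B" for z
    using that by (auto simp: B_def Gc_def vv_def field_simps)
  have d1: "deriv Gc z = G1f z" if "z \<in> B" for z
    by (rule DERIV_imp_deriv, rule has_field_derivative_transform_within_open[OF DG0[OF PB[OF that]] oB that])
       (simp add: GB)
  have d2: "deriv (deriv Gc) z = G2f z" if "z \<in> B" for z
  proof -
    have "eventually (\<lambda>w. w \<in> B) (nhds z)" using oB that by (rule eventually_nhds_in_open)
    then have "eventually (\<lambda>w. deriv Gc w = G1f w) (nhds z)" by eventually_elim (simp add: d1)
    then have "deriv (deriv Gc) z = deriv G1f z" by (rule deriv_cong_ev) simp
    also have "\<dots> = G2f z" by (rule DERIV_imp_deriv[OF DG1[OF PB[OF that]]])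
    finally show ?thesis .
  qed
  have d3: "deriv (deriv (deriv Gc)) z = G3f z" if "z \<in> B" for z
  proof -
    have "eventually (\<lambda>w. w \<in> B) (nhds z)" using oB that by (rule eventually_nhds_in_open)
    then have "eventually (\<lambda>w. deriv (deriv Gc) w = G2f w) (nhds z)" by eventually_elim (simp add: d2)
    then have "deriv (deriv (deriv Gc)) z = deriv G2f z" by (rule deriv_cong_ev) simp
    also have "\<dots> = G3f z" by (rule DERIV_imp_deriv[OF DG2[OF PB[OF that]]])
    finally show ?thesis .
  qed
  have "Hc z = 0" if "z \<in> B" for z
    unfolding Hc_def d1[OF that] d2[OF that] d3[OF that] GB[OF that]
    by (rule ode_pt[OF PB[OF that]])
  moreover have "eventually (\<lambda>z. z \<in> B) (at 0)"
    unfolding B_def eventually_at_filter using e(1)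
    by (intro eventually_mono[OF eventually_nhds_in_open[of "ball 0 e"]]) auto
  ultimately show ?thesis by (auto elim: eventually_mono)
qed

lemma Hc_zero: "eventually (\<lambda>z. Hc z = 0) (nhds 0)"
proof -
  have c: "isCont Hc 0" using has_fps_expansion_imp_continuous[OF Hc_exp] by simp
  have "(Hc \<longlongrightarrow> Hc 0) (at 0)" using c by (simp add: isCont_def)
  moreover have "(Hc \<longlongrightarrow> 0) (at 0)"
    by (rule tendsto_eventually) (rule eventually_mono[OF Hc_zero_punct], simp)
  ultimately have "Hc 0 = 0" by (rule tendsto_unique[rotated]) simp
  with Hc_zero_punct show ?thesis by (simp add: eventually_nhds_conv_at)
qed

lemma fps_identity: "6 * gF^4 + sF * hF = 0"
proof -
  have "Hc has_fps_expansion 0" using Hc_zero by (simp add: has_fps_expansion_0_iff)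
  show ?thesis
    using fps_nth_fps_expansion[OF Hc_exp] fps_nth_fps_expansion[OF \<open>Hc has_fps_expansion 0\<close>]
    by (simp add: fps_eq_iff)
qed


lemma Sc_neg: "Sc (-z) = Sc z"
  by (simp add: Sc_def)

lemma arsinh_neg_c:
  assumes "z^2 + 1 \<notin> \<real>\<^sub>\<le>\<^sub>0" "z + Sc z \<notin> \<real>\<^sub>\<le>\<^sub>0"
  shows "arsinh (-z) = - arsinh z"
proof -
  have nz0: "z^2 + 1 \<noteq> 0" using assms(1) by (metis nonpos_Reals_zero_I)
  have "z + Sc z \<noteq> 0" using assms(2) by (metis nonpos_Reals_zero_I)
  have "(-z + Sc z) * (z + Sc z) = 1"
    using Sc_sq[OF nz0] by (simp add: algebra_simps power2_eq_square)
  then have "-z + Sc z = inverse (z + Sc z)"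
    using \<open>z + Sc z \<noteq> 0\<close> by (simp add: field_simps)
  then show ?thesis
    by (simp add: arsinh_Sc Sc_neg Ln_inverse[OF assms(2)])
qed

lemma gF_odd: "odd n \<Longrightarrow> fps_nth gF n = 0"
proof -
  assume n: "odd n"
  have "eventually (\<lambda>z. (Gc \<circ> uminus) z = Gc z) (nhds 0)"
    using ev1 by eventually_elim (auto simp: Gc_def arsinh_neg_c)
  moreover have "(Gc \<circ> uminus) has_fps_expansion fps_compose gF (-fps_X)"
    by (intro has_fps_expansion_compose Gc_exp has_fps_expansion_minus has_fps_expansion_fps_X) simp
  ultimately have "Gc has_fps_expansion fps_compose gF (-fps_X)"
    using has_fps_expansion_cong by blast
  then have "fps_compose gF (-fps_X) = gF"
    using fps_nth_fps_expansion[OF Gc_exp] fps_nth_fps_expansion[of Gc "fps_compose gF (-fps_X)"]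
    by (simp add: fps_eq_iff)
  then have "(-1)^n * fps_nth gF n = fps_nth gF n"
    by (metis fps_compose_uminus' fps_nth_Abs_fps)
  with n show ?thesis by simp
qed


lemma real_transfer:
  fixes F :: "complex \<Rightarrow> complex" and f :: "real \<Rightarrow> real"
  assumes hol: "F holomorphic_on ball 0 e" and eq: "\<And>x. \<bar>x\<bar> < e \<Longrightarrow> F (of_real x) = of_real (f x)"
  shows "\<bar>x\<bar> < e \<Longrightarrow> (deriv ^^ m) F (of_real x) = of_real ((deriv ^^ m) f x)"
proof (induction m arbitrary: x)
  case 0
  then show ?case by (simp add: eq)
next
  case (Suc m)
  define Fm where "Fm = (deriv ^^ m) F"
  define fm where "fm = (deriv ^^ m) f"
  define D where "D = deriv Fm (of_real x)"
  have holm: "Fm holomorphic_on ball 0 e" unfolding Fm_def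
    by (rule holomorphic_higher_deriv[OF hol open_ball])
  have inb: "(of_real x :: complex) \<in> ball 0 e" using Suc.prems by simp
  have "(Fm has_field_derivative D) (at (of_real x))"
    unfolding D_def using holm inb
    by (meson DERIV_deriv_iff_field_differentiable holomorphic_on_imp_differentiable_at open_ball)
  then have hv0: "((\<lambda>y. Fm (of_real y)) has_vector_derivative D) (at x)"
    by (rule has_vector_derivative_real_field)
  have hv: "((\<lambda>y. complex_of_real (fm y)) has_vector_derivative D) (at x)"
    by (rule has_vector_derivative_transform_within_open[OF hv0, of "{-e<..<e}"])
       (use Suc.prems in \<open>auto simp: Fm_def fm_def Suc.IH\<close>)
  have hr: "(fm has_vector_derivative Re D) (at x)"
    using bounded_linear.has_vector_derivative[OF bounded_linear_Re hv] by simp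
  have hi: "((\<lambda>y. 0::real) has_vector_derivative Im D) (at x)"
    using bounded_linear.has_vector_derivative[OF bounded_linear_Im hv] by simp
  have "Im D = 0"
    using vector_derivative_unique_at[OF hi, of 0] by (simp add: has_vector_derivative_const)
  then have "D = of_real (Re D)" by (simp add: complex_eq_iff)
  moreover have "deriv fm x = Re D"
    using hr by (intro DERIV_imp_deriv) (simp add: has_real_derivative_iff_has_vector_derivative)
  ultimately show ?case by (simp add: D_def Fm_def fm_def)
qed

lemma arsinh_of_real_c: "arsinh (complex_of_real x) = of_real (arsinh x)"
proof -
  have "Sc (of_real x) = of_real (sqrt (x^2 + 1))"
  proof -
    have "Sc (of_real x) = (of_real (x^2 + 1)) powr (of_real (1/2))" by (simp add: Sc_def)
    also have "\<dots> = of_real ((x^2 + 1) powr (1/2))" by (rule powr_of_real) (simp add: add_nonneg_pos)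
    also have "(x^2 + 1) powr (1/2) = sqrt (x^2 + 1)" by (simp add: powr_half_sqrt add_nonneg_pos)
    finally show ?thesis .
  qed
  then have "arsinh (complex_of_real x) = Ln (of_real (x + sqrt (x^2 + 1)))" by (simp add: arsinh_Sc)
  also have "\<dots> = of_real (ln (x + sqrt (x^2 + 1)))" by (rule Ln_of_real[OF arsinh_real_aux])
  finally show ?thesis by (simp add: arsinh_real_def)
qed

lemma Gc_of_real: "Gc (of_real x) = of_real (t_over_arsinh x)"
  by (simp add: Gc_def t_over_arsinh_def arsinh_of_real_c)

lemma Gc_higher_deriv_0: "(deriv ^^ m) Gc 0 = of_real (cauchy2 m)"
proof -
  obtain s where s: "open s" "0 \<in> s" "Gc holomorphic_on s"
    using has_fps_expansion_imp_holomorphic[OF Gc_exp] by blast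
  obtain e where e: "e > 0" "ball 0 e \<subseteq> s" using s(1,2) openE by blast
  have "(deriv ^^ m) Gc (of_real 0) = of_real ((deriv ^^ m) t_over_arsinh 0)"
    by (rule real_transfer[of Gc e t_over_arsinh]) (use e s in \<open>auto intro: holomorphic_on_subset simp: Gc_of_real\<close>)
  then show ?thesis by (simp add: cauchy2_def)
qed

lemma gF_nth_real: "fps_nth gF m = of_real (cauchy2 m / fact m)"
  by (simp add: gF_nth Gc_higher_deriv_0)


lemma hF_nth: "fps_nth hF m = (of_nat m - 1) * (of_nat m - 2) * (of_nat m - 3) * fps_nth gF m
   + (if m \<ge> 2 then (of_nat m - 3)^3 * fps_nth gF (m - 2) else 0)"
proof -
  have e: "fps_nth hF m = (if m < 3 then 0 else fps_nth (fps_deriv (fps_deriv (fps_deriv gF))) (m - 3))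
     - 3 * (if m < 2 then 0 else fps_nth (fps_deriv (fps_deriv gF)) (m - 2))
     + 6 * (if m = 0 then 0 else fps_nth (fps_deriv gF) (m - 1)) - 6 * fps_nth gF m
     + (if m < 5 then 0 else fps_nth (fps_deriv (fps_deriv (fps_deriv gF))) (m - 5))
     + (if m < 3 then 0 else fps_nth (fps_deriv gF) (m - 3))
     - (if m < 2 then 0 else fps_nth gF (m - 2))"
    unfolding hF_def by (simp only: fps_add_nth fps_sub_nth mult.assoc fps_mult_numeral_left
        fps_X_power_mult_nth fps_X_mult_nth)
  consider "m = 0" | "m = 1" | "m = 2" | "m = 3" | "m = 4" | k where "m = k + 5" by atomize_elim presburger
  then show ?thesis
  proof cases
    case 6
    then have m: "m = Suc (Suc (Suc (Suc (Suc k))))" by simp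
    from e show ?thesis by (simp add: m algebra_simps power3_eq_cube)
  qed (use e in \<open>simp_all add: algebra_simps eval_nat_numeral\<close>)
qed



definition EF :: "complex fps" where "EF = Abs_fps (\<lambda>i. fps_nth gF (2*i))"
definition HW :: "complex fps" where "HW = Abs_fps (\<lambda>i. fps_nth hF (2*i))"
definition BF :: "complex fps" where "BF = fps_binomial (of_real (1/2))"

lemma hF_odd: "odd m \<Longrightarrow> fps_nth hF m = 0"
  by (simp add: hF_nth gF_odd)

lemma gF_comp: "gF = EF oo fps_X^2"
  unfolding EF_def by (rule even_fps_compose) (rule gF_odd)

lemma hF_comp: "hF = HW oo fps_X^2"
  unfolding HW_def by (rule even_fps_compose) (rule hF_odd)

lemma E_identity: "6 * fps_nth (EF^4) n + fps_nth (HW * BF) n = 0"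
proof -
  have X0: "fps_nth (fps_X^2 :: complex fps) 0 = 0" by simp
  have "fps_nth (6 * gF^4 + sF * hF) (2*n) = 0" by (simp add: fps_identity)
  moreover have "gF^4 = EF^4 oo fps_X^2"
    by (subst gF_comp) (rule fps_compose_power[OF X0])
  moreover have "sF * hF = (HW * BF) oo fps_X^2"
    unfolding sF_def BF_def by (subst hF_comp) (simp add: fps_compose_mult_distrib[OF X0] mult.commute)
  ultimately show ?thesis by (simp add: compose_X2_nth)
qed

lemma dfact_m3: "dfact (-3) = -1"
  by (simp add: dfact_def)

lemma dfact_step: "dfact (2 * int k - 1) = dfact (2 * int k - 3) * (2 * real k - 1)"
proof (cases k)
  case 0
  then show ?thesis by (simp add: dfact_def)
next
  case (Suc j)
  have a: "nat ((2 * int k - 1 + 1) div 2) = Suc j" using Suc by simp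
  have b: "nat ((2 * int k - 3 + 1) div 2) = j" using Suc by simp
  have c1: "2 * int k - 1 \<ge> -1" by simp
  have c2: "2 * int k - 3 \<ge> -1" using Suc by simp
  have A: "dfact (2 * int k - 1) = (\<Prod>i=1..Suc j. real (2*i-1))"
    unfolding dfact_def if_P[OF c1] a ..
  have B: "dfact (2 * int k - 3) = (\<Prod>i=1..j. real (2*i-1))"
    unfolding dfact_def if_P[OF c2] b ..
  show ?thesis unfolding A B using Suc
    by (simp add: prod.nat_ivl_Suc' of_nat_diff)
qed

lemma half_prod: "(\<Prod>i<k. (1/2 - of_nat i :: real)) = - ((-1)^k * dfact (2 * int k - 3) / 2^k)"
proof (induction k)
  case 0
  then show ?case by (simp add: dfact_m3)
next
  case (Suc k)
  have "(\<Prod>i<Suc k. (1/2 - of_nat i :: real)) = (\<Prod>i<k. (1/2 - of_nat i :: real)) * (1/2 - of_nat k)"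
    by simp
  also have "\<dots> = - ((-1)^k * dfact (2 * int k - 3) / 2^k) * (1/2 - of_nat k)" by (simp add: Suc.IH)
  also have "\<dots> = - ((-1)^Suc k * dfact (2 * int (Suc k) - 3) / 2^Suc k)"
  proof -
    have "2 * int (Suc k) - 3 = 2 * int k - 1" by simp
    then have d: "dfact (2 * int (Suc k) - 3) = dfact (2 * int k - 3) * (2 * real k - 1)"
      using dfact_step[of k] by simp
    show ?thesis unfolding d by (simp add: field_simps)
  qed
  finally show ?case .
qed

lemma BF_nth: "fps_nth BF k = of_real (- ((-1)^k * dfact (2 * int k - 3) / (2^k * fact k)))"
proof -
  have "fact k * (of_real (1/2) gchoose k :: complex) = (\<Prod>i = 0..<k. of_real (1/2) - of_nat i)"
    by (rule gbinomial_mult_fact)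
  also have "\<dots> = of_real (\<Prod>i<k. (1/2 - of_nat i :: real))"
    by (simp add: atLeast0LessThan)
  also have "\<dots> = of_real (- ((-1)^k * dfact (2 * int k - 3) / 2^k))" by (simp add: half_prod)
  finally have "(of_real (1/2) gchoose k :: complex) = of_real (- ((-1)^k * dfact (2 * int k - 3) / 2^k)) / fact k"
    by (simp add: field_simps)
  then show ?thesis by (simp add: BF_def field_simps)
qed


definition cc :: "nat \<Rightarrow> real" where "cc m = cauchy2 m / fact m"
definition hw :: "nat \<Rightarrow> real" where
  "hw l = (2 * real l - 1) * (2 * real l - 2) * (2 * real l - 3) * cc (2*l)
     + (if l \<ge> 1 then (2 * real l - 3)^3 * cc (2*l - 2) else 0)"
definition bn :: "nat \<Rightarrow> real" where
  "bn k = - ((-1)^k * dfact (2 * int k - 3) / (2^k * fact k))"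

lemma gF_cc: "fps_nth gF m = of_real (cc m)"
  by (simp add: gF_nth_real cc_def)

lemma EF_nth: "fps_nth EF i = of_real (cc (2*i))"
  by (simp add: EF_def gF_cc)

lemma HW_nth: "fps_nth HW l = of_real (hw l)"
proof -
  have e: "(2 * l \<ge> 2) = (l \<ge> 1)" by auto
  show ?thesis
    by (simp add: HW_def hF_nth gF_cc hw_def e)
qed

lemma real_identity: "6 * (\<Sum>xs\<in>Lst 4 n. \<Prod>j<4. cc (2 * (xs ! j))) + (\<Sum>l=0..n. hw l * bn (n - l)) = 0"
proof -
  have "fps_nth (EF^4) n = of_real (\<Sum>xs\<in>Lst 4 n. \<Prod>j<4. cc (2 * (xs ! j)))"
    by (simp add: fps_power_nth_lists EF_nth)
  moreover have "fps_nth (HW * BF) n = of_real (\<Sum>l=0..n. hw l * bn (n - l))"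
    by (simp add: fps_mult_nth HW_nth BF_nth bn_def)
  ultimately have "complex_of_real (6 * (\<Sum>xs\<in>Lst 4 n. \<Prod>j<4. cc (2 * (xs ! j))) + (\<Sum>l=0..n. hw l * bn (n - l))) = 0"
    using E_identity[of n] by simp
  then show ?thesis by (simp only: of_real_eq_0_iff)
qed

lemma conv_eq: "cauchy_conv [0,0,0,0] n = fact (2*n) * (\<Sum>xs\<in>Lst 4 n. \<Prod>j<4. cc (2 * (xs ! j)))"
proof -
  have z: "[0,0,0,0::nat] ! k = 0" if "k < 4" for k
    using that by (auto simp: less_Suc_eq nth_Cons' eval_nat_numeral)
  have "cauchy_conv [0,0,0,0] n = (\<Sum>xs\<in>Lst 4 n. fact (2*n) / (\<Prod>k<4. fact (2 * xs!k))
        * (\<Prod>k<4. cauchy2 (2 * xs!k)))"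
  proof -
    have len: "length [0,0,0,0::nat] = 4" by simp
    have p: "(\<Prod>k<4. cauchy2 (2 * xs!k + 2 * [0,0,0,0::nat]!k)) = (\<Prod>k<4. cauchy2 (2 * xs!k))" for xs
      by (rule prod.cong) (simp_all add: z)
    show ?thesis unfolding cauchy_conv_def Lst_def len p ..
  qed
  also have "\<dots> = (\<Sum>xs\<in>Lst 4 n. fact (2*n) * (\<Prod>j<4. cc (2 * (xs ! j))))"
    by (intro sum.cong refl) (simp add: cc_def prod_dividef del: prod.lessThan_Suc)
  finally show ?thesis by (simp add: sum_distrib_left)
qed


lemma fact_2l: "l \<ge> 1 \<Longrightarrow> (fact (2*l) :: real) = (2 * real l) * (2 * real l - 1) * fact (2*l - 2)"
proof -
  assume "l \<ge> 1"
  then obtain j where l: "l = Suc j" by (cases l) auto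
  have "2 * l = Suc (Suc (2*j))" "2 * l - 2 = 2 * j" using l by auto
  then show ?thesis using l by (simp add: algebra_simps)
qed

theorem theorem6:
  fixes n :: nat
  assumes "n \<ge> 1"
  shows "cauchy_conv [0,0,0,0] n =
    fact (2*n) / 6 * (\<Sum>l=0..n. (-1)^(n-l) * dfact (2*int n - 2*int l - 3)
        * ((2*real l - 1) * (2*real l - 2) * (2*real l - 3))
        / (2^(n-l) * fact (n-l) * fact (2*l)) * cauchy2 (2*l))
  + fact (2*n) / 6 * (\<Sum>l=1..n. (-1)^(n-l) * dfact (2*int n - 2*int l - 3)
        * ((2*real l) * (2*real l - 1) * (2*real l - 3)^3)
        / (2^(n-l) * fact (n-l) * fact (2*l)) * cauchy2 (2*l - 2))"
proof -
  define e4 where "e4 = (\<Sum>xs\<in>Lst 4 n. \<Prod>j<4. cc (2 * (xs ! j)))"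
  define wl where "wl l = (-1)^(n-l) * dfact (2*int n - 2*int l - 3) / (2^(n-l) * fact (n-l))" for l
  define A where "A l = wl l * ((2*real l - 1) * (2*real l - 2) * (2*real l - 3)) * cc (2*l)" for l
  define B where "B l = wl l * (2*real l - 3)^3 * cc (2*l - 2)" for l
  have t: "- (hw l * bn (n - l)) = A l + (if l \<ge> 1 then B l else 0)" if "l \<in> {0..n}" for l
  proof -
    have "2 * int (n - l) - 3 = 2*int n - 2*int l - 3" using that by (simp add: of_nat_diff)
    then have b: "bn (n - l) = - wl l" by (simp add: bn_def wl_def)
    show ?thesis unfolding b by (auto simp: hw_def A_def B_def algebra_simps)
  qed
  have "- (\<Sum>l=0..n. hw l * bn (n - l)) = (\<Sum>l=0..n. A l) + (\<Sum>l=0..n. if l \<ge> 1 then B l else 0)"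
    by (simp add: sum_negf[symmetric] t sum.distrib)
  also have "(\<Sum>l=0..n. if l \<ge> 1 then B l else 0) = (\<Sum>l=1..n. B l)"
  proof -
    have "{0..n} = insert 0 {1..n}" by auto
    then show ?thesis by (simp add: sum.insert)
  qed
  finally have key: "6 * e4 = (\<Sum>l=0..n. A l) + (\<Sum>l=1..n. B l)"
    using real_identity[of n] unfolding e4_def by linarith
  have S1: "(\<Sum>l=0..n. (-1)^(n-l) * dfact (2*int n - 2*int l - 3)
        * ((2*real l - 1) * (2*real l - 2) * (2*real l - 3))
        / (2^(n-l) * fact (n-l) * fact (2*l)) * cauchy2 (2*l)) = (\<Sum>l=0..n. A l)"
    by (intro sum.cong refl) (simp add: A_def wl_def cc_def)
  have S2: "(\<Sum>l=1..n. (-1)^(n-l) * dfact (2*int n - 2*int l - 3)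
        * ((2*real l) * (2*real l - 1) * (2*real l - 3)^3)
        / (2^(n-l) * fact (n-l) * fact (2*l)) * cauchy2 (2*l - 2)) = (\<Sum>l=1..n. B l)"
  proof (intro sum.cong refl)
    fix l assume "l \<in> {1..n}"
    then have l: "l \<ge> 1" by simp
    have nz: "2 * real l \<noteq> 0" "2 * real l - 1 \<noteq> 0" using l by auto
    show "(-1)^(n-l) * dfact (2*int n - 2*int l - 3)
        * ((2*real l) * (2*real l - 1) * (2*real l - 3)^3)
        / (2^(n-l) * fact (n-l) * fact (2*l)) * cauchy2 (2*l - 2) = B l"
      unfolding B_def wl_def cc_def fact_2l[OF l] using nz by (simp add: field_simps)
  qed
  show ?thesis
    unfolding conv_eq S1 S2 e4_def[symmetric]
  proof -
    have "fact (2*n) * e4 = fact (2*n) / 6 * (6 * e4)" by simp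
    also have "\<dots> = fact (2*n) / 6 * (\<Sum>l=0..n. A l) + fact (2*n) / 6 * (\<Sum>l=1..n. B l)"
      unfolding key by (simp add: distrib_left)
    finally show "fact (2*n) * e4 = fact (2*n) / 6 * (\<Sum>l=0..n. A l) + fact (2*n) / 6 * (\<Sum>l=1..n. B l)" .
  qed
qed


end
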